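(* Let $X=\{x_1,\dots,x_n\}$ be a finite $T_0$-space with matrix $X_M=(x_{k,l})$, $i$-th row $r_i$ and $j$-th column $c_j$, and let $i\neq j$. Then $x_i\prec x_j$ if and only if $r_i+c_j^{\intercal}=(p_1,\dots,p_n)$ satisfies $p_i=p_j=0$ and $p_k\neq 0$ for every $k\neq i,j$ (here $p_k=x_{i,k}+x_{k,j}$).
   Context: A finite $T_0$-space is identified with a finite poset via $x\le y$ iff $U_x\subseteq U_y$, where $U_x$ is the minimal open set containing $x$. $X_M=(x_{k,l})$ is the $n\times n$ matrix with $x_{k,l}=0$ if $x_k\le x_l$ and $x_{k,l}=1$ otherwise. $x\prec y$ means $x<y$ and there is no $z$ with $x<z<y$. *)

theory Defs
  imports "HOL-Analysis.Analysis"
begin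

definition min_open :: "'a topology \<Rightarrow> 'a \<Rightarrow> 'a set" where
  "min_open T x = \<Inter>{U. openin T U \<and> x \<in> U}"

definition fle :: "'a topology \<Rightarrow> 'a \<Rightarrow> 'a \<Rightarrow> bool" where
  "fle T x y \<longleftrightarrow> x \<in> topspace T \<and> y \<in> topspace T \<and> min_open T x \<subseteq> min_open T y"

definition fless :: "'a topology \<Rightarrow> 'a \<Rightarrow> 'a \<Rightarrow> bool" where
  "fless T x y \<longleftrightarrow> fle T x y \<and> x \<noteq> y"

definition fcover :: "'a topology \<Rightarrow> 'a \<Rightarrow> 'a \<Rightarrow> bool" where
  "fcover T x y \<longleftrightarrow> fless T x y \<and> \<not> (\<exists>z. fless T x z \<and> fless T z y)"

definition space_matrix :: "'a topology \<Rightarrow> (nat \<Rightarrow> 'a) \<Rightarrow> nat \<Rightarrow> nat \<Rightarrow> nat" where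
  "space_matrix T xs k l = (if fle T (xs k) (xs l) then 0 else 1)"

end

theory Submission
  imports Defs
begin

theorem mainTheorem13:
  fixes T :: "'a topology" and xs :: "nat \<Rightarrow> 'a" and n i j :: nat
  assumes "finite (topspace T)"
    and "t0_space T"
    and "bij_betw xs {1..n} (topspace T)"
    and "i \<in> {1..n}" and "j \<in> {1..n}" and "i \<noteq> j"
  shows "fcover T (xs i) (xs j) \<longleftrightarrow>
    (let p = (\<lambda>k. space_matrix T xs i k + space_matrix T xs k j) in
      p i = 0 \<and> p j = 0 \<and> (\<forall>k\<in>{1..n}. k \<noteq> i \<and> k \<noteq> j \<longrightarrow> p k \<noteq> 0))"
proof -
  have inj: "inj_on xs {1..n}" and img: "xs ` {1..n} = topspace T"
    using assms(3) by (auto simp: bij_betw_def)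
  have top: "\<And>k. k \<in> {1..n} \<Longrightarrow> xs k \<in> topspace T" using img by blast
  have refl: "\<And>k. k \<in> {1..n} \<Longrightarrow> fle T (xs k) (xs k)" using top by (simp add: fle_def)
  have ne: "xs i \<noteq> xs j" using inj assms(4,5,6) by (meson inj_on_def)
  have L: "(let p = (\<lambda>k. space_matrix T xs i k + space_matrix T xs k j) in
      p i = 0 \<and> p j = 0 \<and> (\<forall>k\<in>{1..n}. k \<noteq> i \<and> k \<noteq> j \<longrightarrow> p k \<noteq> 0))
    \<longleftrightarrow> fle T (xs i) (xs j) \<and> (\<forall>k\<in>{1..n}. k \<noteq> i \<and> k \<noteq> j \<longrightarrow> \<not> (fle T (xs i) (xs k) \<and> fle T (xs k) (xs j)))"
    using refl[OF assms(4)] refl[OF assms(5)] by (auto simp add: space_matrix_def Let_def)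
  show ?thesis
    unfolding L fcover_def fless_def
  proof safe
    fix k assume k: "k \<in> {1..n}" "k \<noteq> i" "k \<noteq> j" "fle T (xs i) (xs k)" "fle T (xs k) (xs j)"
      and no: "\<nexists>z. (fle T (xs i) z \<and> xs i \<noteq> z) \<and> fle T z (xs j) \<and> z \<noteq> xs j"
    have "xs k \<noteq> xs i" "xs k \<noteq> xs j" using inj k assms(4,5) by (meson inj_on_def)+
    then show False using no k by metis
  next
    fix z assume z: "fle T (xs i) z" "xs i \<noteq> z" "fle T z (xs j)" "z \<noteq> xs j"
      and all: "\<forall>k\<in>{1..n}. k \<noteq> i \<and> k \<noteq> j \<longrightarrow> \<not> (fle T (xs i) (xs k) \<and> fle T (xs k) (xs j))"
    have "z \<in> topspace T" using z by (simp add: fle_def)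
    then obtain k where k: "k \<in> {1..n}" "z = xs k" using img by blast
    then show False using z all by metis
  qed (use ne in auto)
qed

end
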